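(* Let $C\subseteq\mathbb{R}^n$ be a nonempty closed convex set and $D\subseteq\mathbb{R}^n$ a nonempty compact set. Given $x^0\in\mathbb{R}^n$ and $\gamma\in(0,\frac1{12})$, consider the iteration \[ y^{t+1}=\frac{\gamma P_C\!\left(\frac{x^t}{1+5\gamma}\right)+x^t}{6\gamma+1},\qquad z^{t+1}\in P_D\!\left(\frac{2y^{t+1}-x^t}{1-5\gamma}\right),\qquad x^{t+1}=x^t+2(z^{t+1}-y^{t+1}). \] Then $\{(y^t,z^t,x^t)\}$ is bounded, and every cluster point $(\bar y,\bar z,\bar x)$ satisfies $\bar y=\bar z$ and $0\in\nabla F(\bar z)+\partial\delta_D(\bar z)$, where $F=\frac12 d_C^2$; i.e., $\bar z$ is a stationary point of $\min_u \frac12 d_C^2(u)+\delta_D(u)$.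
   Context: $d_C$ is the Euclidean distance to $C$, $P_C$ the projection onto $C$, $P_D(x)$ the (possibly multivalued) set of points of $D$ nearest to $x$ (any element may be chosen), and $\delta_D$ the indicator function of $D$ ($0$ on $D$, $+\infty$ outside). $\partial\delta_D$ is the limiting subdifferential: $v\in\partial h(x)$ iff there exist $x^t\to x$ with $h(x^t)\to h(x)$ and $v^t\to v$ such that $\liminf_{z\to x^t, z\ne x^t}\frac{h(z)-h(x^t)-\langle v^t,z-x^t\rangle}{\|z-x^t\|}\ge0$ for each $t$. *)

theory Defs
  imports "HOL-Analysis.Analysis" "HOL-Library.Extended_Real"
begin

definition proj_set :: "'a::metric_space set \<Rightarrow> 'a \<Rightarrow> 'a set" where
  "proj_set D w = {d \<in> D. \<forall>e\<in>D. dist w d \<le> dist w e}"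

definition indicator_fun :: "'a set \<Rightarrow> 'a \<Rightarrow> ereal" where
  "indicator_fun D u = (if u \<in> D then 0 else \<infinity>)"

definition frechet_subdiff :: "('a::real_inner \<Rightarrow> ereal) \<Rightarrow> 'a \<Rightarrow> 'a set" where
  "frechet_subdiff h x = {v. \<bar>h x\<bar> \<noteq> \<infinity> \<and>
     Liminf (at x) (\<lambda>z. (h z - h x - ereal (v \<bullet> (z - x))) / ereal (norm (z - x))) \<ge> 0}"

definition limiting_subdiff :: "('a::real_inner \<Rightarrow> ereal) \<Rightarrow> 'a \<Rightarrow> 'a set" where
  "limiting_subdiff h x = {v. \<exists>xs vs. xs \<longlonglongrightarrow> x \<and> (\<lambda>t. h (xs t)) \<longlonglongrightarrow> h x \<and>
     vs \<longlonglongrightarrow> v \<and> (\<forall>t. vs t \<in> frechet_subdiff h (xs t))}"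

end

theory Submission imports Defs begin
lemma norm_add_sq: "(norm (a + b))\<^sup>2 = (norm a)\<^sup>2 + (norm b)\<^sup>2 + 2 * inner a (b::'a::real_inner)"
  by (simp add: power2_norm_eq_inner inner_add_left inner_add_right inner_commute)


lemma seg_closest:
  fixes C :: "'a::euclidean_space set"
  assumes C: "closed C" "convex C" "C \<noteq> {}"
    and l: "0 \<le> l" "l \<le> 1"
    and y: "y = closest_point C q + l *\<^sub>R (q - closest_point C q)"
  shows "closest_point C y = closest_point C q"
proof -
  let ?P = "closest_point C q"
  have "dist y ?P \<le> dist y c" if c: "c \<in> C" for c
  proof -
    have d: "inner (q - ?P) (c - ?P) \<le> 0" using closest_point_dot[OF C(2,1) c] .
    have "(dist y c)\<^sup>2 = (norm ((y - ?P) + (?P - c)))\<^sup>2" by (simp add: dist_norm)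
    also have "\<dots> = (norm (y - ?P))\<^sup>2 + (norm (?P - c))\<^sup>2 + 2 * inner (y - ?P) (?P - c)"
      by (rule norm_add_sq)
    also have "inner (y - ?P) (?P - c) = - l * inner (q - ?P) (c - ?P)"
      unfolding y by (simp add: inner_diff_right inner_diff_left algebra_simps)
    finally have eq: "(dist y c)\<^sup>2 = (norm (y - ?P))\<^sup>2 + (norm (?P - c))\<^sup>2 + 2 * (- l * inner (q - ?P) (c - ?P))" .
    have nl: "l * inner (q - ?P) (c - ?P) \<le> 0" by (rule mult_nonneg_nonpos[OF l(1) d])
    have z0: "0 \<le> (norm (?P - c))\<^sup>2" by simp
    have "(norm (y - c))\<^sup>2 \<ge> (norm (y - ?P))\<^sup>2" using eq[unfolded dist_norm] nl z0 by linarith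
    hence "(dist y c)\<^sup>2 \<ge> (dist y ?P)\<^sup>2" by (simp add: dist_norm)
    then show ?thesis by (rule power2_le_imp_le) simp
  qed
  hence all: "\<forall>c\<in>C. dist y ?P \<le> dist y c" by blast
  have "?P = closest_point C y"
    by (rule closest_point_unique[OF C(2,1) closest_point_in_set[OF C(1,3)] all])
  then show ?thesis by simp
qed




definition Fd :: "'a::euclidean_space set \<Rightarrow> 'a \<Rightarrow> real" where
  "Fd C u = (norm (u - closest_point C u))\<^sup>2 / 2"

lemma Fd_grad_ineq:
  fixes C :: "'a::euclidean_space set"
  assumes C: "closed C" "convex C" "C \<noteq> {}"
  shows "Fd C p \<ge> Fd C q + inner (q - closest_point C q) (p - q)"
proof -
  let ?r = "q - closest_point C q" and ?s = "p - closest_point C p"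
  have d: "inner ?r (closest_point C p - closest_point C q) \<le> 0"
    using closest_point_dot[OF C(2,1) closest_point_in_set[OF C(1,3)]] .
  have "0 \<le> (norm (?s - ?r))\<^sup>2" by simp
  hence "(norm ?s)\<^sup>2 \<ge> (norm ?r)\<^sup>2 + 2 * inner ?r (?s - ?r)"
    by (simp add: power2_norm_eq_inner inner_diff_left inner_diff_right inner_commute)
  moreover have "inner ?r (?s - ?r) = inner ?r (p - q) - inner ?r (closest_point C p - closest_point C q)"
    by (simp add: inner_diff_right)
  ultimately show ?thesis using d unfolding Fd_def by linarith
qed

lemma Fd_deriv:
  fixes C :: "'a::euclidean_space set"
  assumes C: "closed C" "convex C" "C \<noteq> {}"
  shows "(Fd C has_derivative (\<lambda>h. inner (x - closest_point C x) h)) (at x)"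
  unfolding has_derivative_at_alt
proof (intro conjI allI impI)
  show "bounded_linear (\<lambda>h. inner (x - closest_point C x) h)" by (rule bounded_linear_inner_right)
  fix e :: real assume e: "e > 0"
  show "\<exists>d>0. \<forall>y. norm (y - x) < d \<longrightarrow>
      norm (Fd C y - Fd C x - inner (x - closest_point C x) (y - x)) \<le> e * norm (y - x)"
  proof (intro exI[of _ "e/2"] conjI allI impI)
    show "e/2 > 0" using e by simp
    fix y assume yd: "norm (y - x) < e/2"
    let ?r = "x - closest_point C x" and ?r' = "y - closest_point C y"
    have lo: "Fd C y - Fd C x - inner ?r (y - x) \<ge> 0" using Fd_grad_ineq[OF C, where p=y and q=x] by simp
    have up0: "Fd C x \<ge> Fd C y + inner ?r' (x - y)" using Fd_grad_ineq[OF C, where p=x and q=y] .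
    have "inner ?r' (x - y) = - inner ?r' (y - x)" by (simp add: inner_diff_right)
    hence up1: "Fd C y - Fd C x - inner ?r (y - x) \<le> inner (?r' - ?r) (y - x)"
      using up0 by (simp add: inner_diff_left)
    have "inner (?r' - ?r) (y - x) \<le> norm (?r' - ?r) * norm (y - x)"
      by (rule norm_cauchy_schwarz)
    also have "norm (?r' - ?r) \<le> 2 * norm (y - x)"
    proof -
      have "?r' - ?r = (y - x) - (closest_point C y - closest_point C x)" by simp
      hence "norm (?r' - ?r) \<le> norm (y - x) + norm (closest_point C y - closest_point C x)"
        by (metis norm_triangle_ineq4)
      moreover have "norm (closest_point C y - closest_point C x) \<le> norm (y - x)"
        using closest_point_lipschitz[OF C(2,1,3), of y x] by (simp add: dist_norm)
      ultimately show ?thesis by simp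
    qed
    hence "norm (?r' - ?r) * norm (y - x) \<le> 2 * norm (y - x) * norm (y - x)"
      by (simp add: mult_right_mono)
    also have "\<dots> \<le> e * norm (y - x)"
      using yd by (simp add: mult_right_mono)
    finally show "norm (Fd C y - Fd C x - inner ?r (y - x)) \<le> e * norm (y - x)"
      using lo up1 by simp
  qed
qed

lemma infdist_Fd:
  fixes C :: "'a::euclidean_space set"
  assumes C: "closed C" "C \<noteq> {}"
  shows "(infdist u C)\<^sup>2 / 2 = Fd C u"
  unfolding Fd_def infdist_eq_setdist setdist_closest_point[OF C] dist_norm ..



lemma prox_normal:
  fixes D :: "'a::euclidean_space set"
  assumes zp: "z \<in> proj_set D w" and l: "l \<ge> 0"
  shows "l *\<^sub>R (w - z) \<in> frechet_subdiff (indicator_fun D) z"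
proof -
  have zD: "z \<in> D" and zmin: "\<And>e. e \<in> D \<Longrightarrow> dist w z \<le> dist w e"
    using zp unfolding proj_set_def by auto
  have key: "inner (w - z) (u - z) \<le> (norm (u - z))\<^sup>2 / 2" if u: "u \<in> D" for u
  proof -
    have "(norm (w - z))\<^sup>2 \<le> (norm (w - u))\<^sup>2"
      using zmin[OF u] by (simp add: dist_norm power_mono)
    moreover have "w - u = (w - z) - (u - z)" by simp
    hence "(norm (w - u))\<^sup>2 = (norm (w - z))\<^sup>2 - 2 * inner (w - z) (u - z) + (norm (u - z))\<^sup>2"
      by (simp only: power2_norm_eq_inner inner_diff_left inner_diff_right inner_commute) (simp add: inner_commute)
    ultimately show ?thesis by simp
  qed
  let ?v = "l *\<^sub>R (w - z)"
  let ?Q = "\<lambda>u. (indicator_fun D u - indicator_fun D z - ereal (?v \<bullet> (u - z))) / ereal (norm (u - z))"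
  have "0 \<le> Liminf (at z) ?Q"
    unfolding le_Liminf_iff
  proof (intro allI impI)
    fix y :: ereal assume "y < 0"
    then obtain c where yc: "y < ereal c" and c0: "ereal c < 0" using ereal_dense2 by blast
    hence c: "c < 0" by simp
    define d where "d = - 2 * c / (l + 1)"
    have d: "d > 0" using c l by (simp add: d_def divide_neg_pos)
    have "\<forall>u. u \<noteq> z \<and> dist u z < d \<longrightarrow> y < ?Q u"
    proof (intro allI impI)
      fix u assume u: "u \<noteq> z \<and> dist u z < d"
      have n: "norm (u - z) > 0" using u by simp
      show "y < ?Q u"
      proof (cases "u \<in> D")
        case False
        then show ?thesis using zD n yc by (auto simp add: indicator_fun_def)
      next
        case True
        have Qu: "?Q u = ereal (- (?v \<bullet> (u - z)) / norm (u - z))"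
          using True zD n by (simp add: indicator_fun_def)
        have a: "?v \<bullet> (u - z) \<le> l * ((norm (u - z))\<^sup>2 / 2)"
          using mult_left_mono[OF key[OF True] l] by simp
        have nd: "norm (u - z) < d" using u by (simp add: dist_norm)
        have "l * norm (u - z) \<le> (l + 1) * norm (u - z)" using n by simp
        also have "\<dots> < (l + 1) * d" using nd l by simp
        also have "\<dots> = - 2 * c" using l by (simp add: d_def)
        finally have h: "l * norm (u - z) \<le> - 2 * c" by simp
        have "l * ((norm (u - z))\<^sup>2 / 2) = (l * norm (u - z)) * norm (u - z) / 2"
          by (simp add: power2_eq_square)
        also have "\<dots> \<le> (- 2 * c) * norm (u - z) / 2"
          using mult_right_mono[OF h, of "norm (u - z)"] by simp
        finally have "l * ((norm (u - z))\<^sup>2 / 2) \<le> - c * norm (u - z)" by simp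
        hence "?v \<bullet> (u - z) \<le> - c * norm (u - z)" using a by linarith
        hence "c \<le> - (?v \<bullet> (u - z)) / norm (u - z)"
          using n by (simp add: field_simps)
        then show ?thesis unfolding Qu using yc by (meson less_le_trans ereal_less_eq(3))
      qed
    qed
    then show "eventually (\<lambda>u. y < ?Q u) (at z)"
      unfolding eventually_at using d by blast
  qed
  moreover have "\<bar>indicator_fun D z\<bar> \<noteq> \<infinity>" using zD by (simp add: indicator_fun_def)
  ultimately show ?thesis unfolding frechet_subdiff_def by simp
qed



lemma merit_identity:
  fixes p p' a a' z :: "'a::real_inner"
  assumes zdef: "z = (1/2) *\<^sub>R (p' + a' + p - a)"
  shows "(norm (z - (p' - a')))\<^sup>2 / 2 - (norm a')\<^sup>2 / 2 - (norm (z - (p - a)))\<^sup>2 / 2 + (norm a)\<^sup>2 / 2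
     = - inner (p' - p) (a' + a) / 2 - inner (p' - p) (a' - a) / 2 + (norm (a' - a))\<^sup>2 / 2"
  unfolding zdef
  apply (simp add: power2_norm_eq_inner inner_add_left inner_add_right inner_diff_left inner_diff_right
      inner_commute)
  apply (simp add: field_simps)
  done

lemma merit_step:
  fixes p p' a a' z z' :: "'a::real_inner" and g fp fp' psz psz' :: real
  assumes g: "0 < g" "g < 1/12"
    and zdef: "z = (1/2) *\<^sub>R (p' + a' + p - a)"
    and H1: "fp \<ge> fp' + inner a' (p - p') + (5*g/2) * (norm (p' - p))\<^sup>2"
    and H2: "(norm (a' - a))\<^sup>2 \<le> 49 * g\<^sup>2 * (norm (p' - p))\<^sup>2"
    and H3: "psz' + (norm (z' - (p' - a')))\<^sup>2 / 2 \<le> psz + (norm (z - (p' - a')))\<^sup>2 / 2"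
  shows "fp' + psz' + (norm (z' - (p' - a')))\<^sup>2 / 2 - (norm a')\<^sup>2 / 2
       \<le> fp + psz + (norm (z - (p - a)))\<^sup>2 / 2 - (norm a)\<^sup>2 / 2 - g/4 * (norm (p' - p))\<^sup>2"
proof -
  let ?N = "(norm (p' - p))\<^sup>2"
  have I: "(norm (z - (p' - a')))\<^sup>2 / 2 - (norm a')\<^sup>2 / 2 - (norm (z - (p - a)))\<^sup>2 / 2 + (norm a)\<^sup>2 / 2
     = - inner (p' - p) (a' + a) / 2 - inner (p' - p) (a' - a) / 2 + (norm (a' - a))\<^sup>2 / 2"
    by (rule merit_identity[OF zdef])
  have J: "inner a' (p - p') = - inner (p' - p) (a' + a) / 2 - inner (p' - p) (a' - a) / 2"
    apply (simp add: inner_add_left inner_add_right inner_diff_left inner_diff_right inner_commute)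
    apply (simp add: field_simps)
    done
  have N0: "?N \<ge> 0" by simp
  have "g * (49 * g) \<le> g * (9/2)" using g by (intro mult_left_mono) auto
  hence "(g * (49 * g)) * ?N \<le> (g * (9/2)) * ?N" by (rule mult_right_mono[OF _ N0])
  hence K: "49 * g\<^sup>2 * ?N \<le> (9/2) * g * ?N"
    by (simp add: power2_eq_square mult.commute mult.left_commute)
  show ?thesis using I J K H1 H2 H3 by linarith
qed


lemma G_lip:
  fixes C :: "'a::euclidean_space set"
  assumes C: "closed C" "convex C" "C \<noteq> {}"
  shows "norm ((6 *\<^sub>R p' - closest_point C p') - (6 *\<^sub>R p - closest_point C p)) \<le> 7 * norm (p' - p)"
proof -
  have "(6 *\<^sub>R p' - closest_point C p') - (6 *\<^sub>R p - closest_point C p)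
      = 6 *\<^sub>R (p' - p) - (closest_point C p' - closest_point C p)" by (simp add: algebra_simps)
  hence "norm ((6 *\<^sub>R p' - closest_point C p') - (6 *\<^sub>R p - closest_point C p))
      \<le> norm (6 *\<^sub>R (p' - p)) + norm (closest_point C p' - closest_point C p)"
    by (metis norm_triangle_ineq4)
  moreover have "norm (closest_point C p' - closest_point C p) \<le> norm (p' - p)"
    using closest_point_lipschitz[OF C(2,1,3), of p' p] by (simp add: dist_norm)
  moreover have "norm (6 *\<^sub>R (p' - p)) = 6 * norm (p' - p)" by simp
  ultimately show ?thesis by linarith
qed

lemma f_strong:
  fixes C :: "'a::euclidean_space set"
  assumes C: "closed C" "convex C" "C \<noteq> {}" and g: "g > 0"
  shows "g * (Fd C p + 5/2 * (norm p)\<^sup>2) \<ge> g * (Fd C q + 5/2 * (norm q)\<^sup>2)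
     + inner (g *\<^sub>R (6 *\<^sub>R q - closest_point C q)) (p - q) + (5*g/2) * (norm (q - p))\<^sup>2"
proof -
  let ?A = "Fd C q + 5/2 * (norm q)\<^sup>2" and ?X = "inner (q - closest_point C q) (p - q) + 5 * inner q (p - q)"
    and ?N = "(norm (q - p))\<^sup>2"
  have F: "Fd C p \<ge> Fd C q + inner (q - closest_point C q) (p - q)" by (rule Fd_grad_ineq[OF C])
  have Q: "5/2 * (norm p)\<^sup>2 = 5/2 * (norm q)\<^sup>2 + 5 * inner q (p - q) + 5/2 * (norm (q - p))\<^sup>2"
    apply (simp add: power2_norm_eq_inner inner_diff_left inner_diff_right inner_commute)
    apply (simp add: field_simps)
    done
  have I: "inner (g *\<^sub>R (6 *\<^sub>R q - closest_point C q)) (p - q) = g * ?X"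
    by (simp add: inner_diff_left algebra_simps)
  have "Fd C p + 5/2 * (norm p)\<^sup>2 \<ge> ?A + ?X + 5/2 * ?N"
    using F Q by linarith
  hence ineq: "g * (Fd C p + 5/2 * (norm p)\<^sup>2) \<ge> g * (?A + ?X + 5/2 * ?N)"
    using g by (intro mult_left_mono) auto
  have L: "g * (?A + ?X + 5/2 * ?N) = g * ?A + g * ?X + (5*g/2) * ?N"
    by (simp add: distrib_left)
  show ?thesis unfolding I using ineq L by linarith
qed

lemma zopt:
  fixes D :: "'a::euclidean_space set"
  assumes B: "0 < B" "B = 1 - 5*g" and zp: "z \<in> proj_set D ((1/B) *\<^sub>R w)" and e: "e \<in> D"
  shows "- (5*g/2) * (norm z)\<^sup>2 + (norm (z - w))\<^sup>2 / 2 \<le> - (5*g/2) * (norm e)\<^sup>2 + (norm (e - w))\<^sup>2 / 2"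
proof -
  define q where "q = (1/B) *\<^sub>R w"
  have wq: "w = B *\<^sub>R q" using B by (simp add: q_def)
  have id: "- (5*g/2) * (norm u)\<^sup>2 + (norm (u - w))\<^sup>2 / 2 = B/2 * (norm (u - q))\<^sup>2 + (B\<^sup>2/2 - B/2) * (norm q)\<^sup>2" for u
  proof -
    have e1: "(norm (u - w))\<^sup>2 = (norm u)\<^sup>2 - 2 * B * inner u q + B\<^sup>2 * (norm q)\<^sup>2"
      unfolding wq power2_norm_eq_inner by (simp add: inner_diff_left inner_diff_right inner_commute power2_eq_square algebra_simps)
    have e2: "(norm (u - q))\<^sup>2 = (norm u)\<^sup>2 - 2 * inner u q + (norm q)\<^sup>2"
      by (simp add: power2_norm_eq_inner inner_diff_left inner_diff_right inner_commute)
    have g5: "g = (1 - B) / 5" using B(2) by simp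
    show ?thesis unfolding e1 e2 g5 by (simp add: power2_eq_square field_simps)
  qed
  have "dist q z \<le> dist q e" using zp e unfolding proj_set_def q_def by auto
  hence "(norm (z - q))\<^sup>2 \<le> (norm (e - q))\<^sup>2"
    by (simp add: dist_norm norm_minus_commute power_mono)
  hence "B/2 * (norm (z - q))\<^sup>2 \<le> B/2 * (norm (e - q))\<^sup>2" using B by (intro mult_left_mono) auto
  then show ?thesis unfolding id by simp
qed
theorem mainTheorem11:
  fixes C D :: "(real ^ 'n) set"
    and x y z :: "nat \<Rightarrow> real ^ 'n"
    and \<gamma> :: real
  assumes C: "closed C" "convex C" "C \<noteq> {}"
    and D: "compact D" "D \<noteq> {}"
    and \<gamma>: "0 < \<gamma>" "\<gamma> < 1/12"
    and y_step: "\<And>t. y (Suc t) =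
        (1 / (6*\<gamma> + 1)) *\<^sub>R (\<gamma> *\<^sub>R closest_point C ((1 / (1 + 5*\<gamma>)) *\<^sub>R x t) + x t)"
    and z_step: "\<And>t. z (Suc t) \<in> proj_set D ((1 / (1 - 5*\<gamma>)) *\<^sub>R (2 *\<^sub>R y (Suc t) - x t))"
    and x_step: "\<And>t. x (Suc t) = x t + 2 *\<^sub>R (z (Suc t) - y (Suc t))"
  shows "bounded (range (\<lambda>t. (y t, z t, x t))) \<and>
    (\<forall>yb zb xb. (\<exists>r. strict_mono r \<and> (\<lambda>t. (y (r t), z (r t), x (r t))) \<longlonglongrightarrow> (yb, zb, xb)) \<longrightarrow>
       yb = zb \<and>
       (\<exists>g v. ((\<lambda>u. (infdist u C)\<^sup>2 / 2) has_derivative (\<lambda>h. g \<bullet> h)) (at zb) \<and>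
              v \<in> limiting_subdiff (indicator_fun D) zb \<and> g + v = 0))"
proof -
  define A where "A = 1 + 5*\<gamma>"
  define B where "B = 1 - 5*\<gamma>"
  define k where "k = 6*\<gamma> + 1"
  have A0: "A > 0" and B0: "B > 0" and k0: "k > 0" and Ak: "A \<le> k" and k1: "1 \<le> k"
    using \<gamma> by (auto simp: A_def B_def k_def)
  define P where "P t = closest_point C ((1/A) *\<^sub>R x t)" for t
  have yS: "y (Suc t) = (1/k) *\<^sub>R (\<gamma> *\<^sub>R P t + x t)" for t
    unfolding P_def A_def k_def by (rule y_step)
  have xk: "x t = k *\<^sub>R y (Suc t) - \<gamma> *\<^sub>R P t" for t
    using k0 by (simp add: yS)
  have cpgen: "closest_point C ((1/k) *\<^sub>R (\<gamma> *\<^sub>R closest_point C ((1/A) *\<^sub>R v) + v)) = closest_point C ((1/A) *\<^sub>R v)" for v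
  proof -
    let ?P = "closest_point C ((1/A) *\<^sub>R v)"
    have r1: "?P + (A/k) *\<^sub>R ((1/A) *\<^sub>R v - ?P) = (1 - A/k) *\<^sub>R ?P + ((A/k)*(1/A)) *\<^sub>R v"
      by (simp add: algebra_simps)
    have r2: "1 - A/k = \<gamma>/k" using k0 by (simp add: A_def k_def field_simps)
    have r3: "(A/k)*(1/A) = 1/k" using A0 by simp
    have r4: "(1/k) *\<^sub>R (\<gamma> *\<^sub>R ?P + v) = (\<gamma>/k) *\<^sub>R ?P + (1/k) *\<^sub>R v"
      by (simp add: algebra_simps)
    have e: "(1/k) *\<^sub>R (\<gamma> *\<^sub>R ?P + v) = ?P + (A/k) *\<^sub>R ((1/A) *\<^sub>R v - ?P)"
      by (simp only: r4 r1 r2 r3)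
    have l0: "0 \<le> A/k" and l1: "A/k \<le> 1" using A0 k0 Ak by auto
    show ?thesis by (rule seg_closest[OF C(1,2,3) l0 l1 e])
  qed
  have cpy: "closest_point C (y (Suc t)) = P t" for t
    unfolding yS P_def by (rule cpgen)
  define G where "G u = 6 *\<^sub>R u - closest_point C u" for u
  define a where "a t = x t - y (Suc t)" for t
  have aG: "a t = \<gamma> *\<^sub>R G (y (Suc t))" for t
  proof -
    have "a t = (k - 1) *\<^sub>R y (Suc t) - \<gamma> *\<^sub>R P t"
      unfolding a_def using xk[of t] by (simp add: algebra_simps)
    also have "k - 1 = \<gamma> * 6" by (simp add: k_def)
    finally show ?thesis unfolding G_def cpy by (simp add: algebra_simps)
  qed
  obtain R where R: "\<And>d. d \<in> D \<Longrightarrow> norm d \<le> R"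
    using compact_imp_bounded[OF D(1)] unfolding bounded_iff by blast
  have zD: "z (Suc t) \<in> D" for t using z_step[of t] unfolding proj_set_def by blast
  define P0 where "P0 = closest_point C 0"
  have Pb: "norm (P t) \<le> norm P0 + norm (x t) / A" for t
  proof -
    have "dist (P t) P0 \<le> dist ((1/A) *\<^sub>R x t) 0"
      unfolding P_def P0_def by (rule closest_point_lipschitz[OF C(2,1,3)])
    hence "norm (P t - P0) \<le> norm (x t) / A" using A0 by (simp add: dist_norm)
    thus ?thesis using norm_triangle_ineq2[of "P t" P0] by linarith
  qed
  have xrec: "x (Suc t) = ((6*\<gamma> - 1)/k) *\<^sub>R x t + 2 *\<^sub>R z (Suc t) - (2*\<gamma>/k) *\<^sub>R P t" for t
  proof -
    have c: "(6*\<gamma> - 1)/k = 1 - 2/k" using k0 by (simp add: k_def field_simps)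
    show ?thesis unfolding x_step yS c by (simp add: algebra_simps)
  qed
  define \<alpha> where "\<alpha> = (1 - 6*\<gamma>)/k + 2*\<gamma>/(k*A)"
  define \<beta> where "\<beta> = 2*R + (2*\<gamma>/k) * norm P0"
  have tri: "norm (u + v - w) \<le> norm u + norm v + norm w" for u v w :: "real^'n"
    by (smt (verit) norm_triangle_ineq norm_triangle_ineq4)
  have xn: "norm (x (Suc t)) \<le> \<alpha> * norm (x t) + \<beta>" for t
  proof -
    have neg: "(6*\<gamma> - 1)/k < 0" using \<gamma> k0 by (simp add: divide_neg_pos)
    have n1: "norm (((6*\<gamma> - 1)/k) *\<^sub>R x t) = ((1 - 6*\<gamma>)/k) * norm (x t)"
    proof -
      have "\<bar>6*\<gamma> - 1\<bar> = 1 - 6*\<gamma>" using \<gamma> by simp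
      moreover have "\<bar>k\<bar> = k" using k0 by simp
      ultimately show ?thesis by simp
    qed
    have n2: "norm (2 *\<^sub>R z (Suc t)) \<le> 2 * R" using R[OF zD[of t]] by simp
    have n3: "norm ((2*\<gamma>/k) *\<^sub>R P t) \<le> (2*\<gamma>/k) * (norm P0 + norm (x t) / A)"
    proof -
      have c0: "0 \<le> 2*\<gamma>/k" using \<gamma> k0 by simp
      have "norm ((2*\<gamma>/k) *\<^sub>R P t) = (2*\<gamma>/k) * norm (P t)" by (simp only: norm_scaleR abs_of_nonneg[OF c0])
      thus ?thesis using mult_left_mono[OF Pb[of t] c0] by simp
    qed
    have n4: "(2*\<gamma>/k) * (norm P0 + norm (x t) / A) = (2*\<gamma>/k) * norm P0 + (2*\<gamma>/(k*A)) * norm (x t)"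
      using A0 k0 by (simp add: field_simps)
    show ?thesis unfolding xrec \<alpha>_def \<beta>_def
      using tri[of "((6*\<gamma> - 1)/k) *\<^sub>R x t" "2 *\<^sub>R z (Suc t)" "(2*\<gamma>/k) *\<^sub>R P t"] n1 n2 n3 n4
      by (simp add: algebra_simps)
  qed
  have \<alpha>0: "\<alpha> \<ge> 0" unfolding \<alpha>_def using \<gamma> k0 A0 by simp
  have \<alpha>1: "\<alpha> < 1"
  proof -
    have e: "\<alpha> = ((1 - 6*\<gamma>)*A + 2*\<gamma>)/(k*A)" unfolding \<alpha>_def using A0 k0 by (simp add: field_simps)
    have h: "0 < \<gamma>*10 + \<gamma>*(\<gamma>*60)" using \<gamma> by (intro add_pos_pos mult_pos_pos) auto
    hence "(1 - 6*\<gamma>)*A + 2*\<gamma> < k*A" by (simp add: A_def k_def algebra_simps)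
    thus ?thesis unfolding e using A0 k0 by simp
  qed
  define M where "M = max (norm (x 0)) (\<beta>/(1-\<alpha>))"
  have Mx: "norm (x t) \<le> M" for t
  proof (induction t)
    case 0 then show ?case by (simp add: M_def)
  next
    case (Suc t)
    have "\<beta>/(1-\<alpha>) \<le> M" by (simp add: M_def)
    hence b: "\<beta> \<le> M * (1-\<alpha>)" using \<alpha>1 by (simp add: pos_divide_le_eq)
    have "\<alpha> * norm (x t) \<le> \<alpha> * M" using Suc \<alpha>0 by (simp add: mult_left_mono)
    then show ?case using xn[of t] b by (simp add: algebra_simps)
  qed
  define My where "My = \<gamma> * (norm P0 + M / A) + M"
  have Myb: "norm (y (Suc t)) \<le> My" for t
  proof -
    have "norm (y (Suc t)) = (1/k) * norm (\<gamma> *\<^sub>R P t + x t)" using k0 by (simp add: yS)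
    also have "\<dots> \<le> norm (\<gamma> *\<^sub>R P t + x t)" using k1 mult_left_mono[OF k1 norm_ge_zero[of "\<gamma> *\<^sub>R P t + x t"]] by (simp add: divide_le_eq)
    also have "\<dots> \<le> \<gamma> * norm (P t) + norm (x t)" using \<gamma> by (metis norm_triangle_ineq norm_scaleR abs_of_pos)
    also have "\<dots> \<le> \<gamma> * (norm P0 + M / A) + M"
    proof -
      have "norm (x t) / A \<le> M / A" using Mx[of t] A0 by (simp add: divide_right_mono)
      hence "norm (P t) \<le> norm P0 + M / A" using Pb[of t] by linarith
      hence "\<gamma> * norm (P t) \<le> \<gamma> * (norm P0 + M / A)" using \<gamma> by (simp add: mult_left_mono)
      thus ?thesis using Mx[of t] by linarith
    qed
    finally show ?thesis unfolding My_def .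
  qed
  have bnd: "bounded (range (\<lambda>t. (y t, z t, x t)))"
  proof -
    have bdy: "bounded (range y)"
    proof (rule boundedI)
      fix v assume "v \<in> range y"
      then obtain t where v: "v = y t" by blast
      show "norm v \<le> max (norm (y 0)) My"
        unfolding v by (cases t) (auto simp: Myb intro: le_max_iff_disj[THEN iffD2])
    qed
    have bz: "bounded (range z)"
    proof (rule boundedI)
      fix v assume "v \<in> range z"
      then obtain t where v: "v = z t" by blast
      show "norm v \<le> max (norm (z 0)) R"
        unfolding v by (cases t) (auto simp: R zD intro: le_max_iff_disj[THEN iffD2])
    qed
    have bx: "bounded (range x)" by (rule boundedI[where B=M]) (auto simp: Mx)
    have "range (\<lambda>t. (y t, z t, x t)) \<subseteq> range y \<times> (range z \<times> range x)" by auto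
    thus ?thesis using bounded_subset[OF bounded_Times[OF bdy bounded_Times[OF bz bx]]] by blast
  qed
  have aL: "norm (a (Suc t) - a t) \<le> 7 * \<gamma> * norm (y (Suc (Suc t)) - y (Suc t))" for t
  proof -
    have "a (Suc t) - a t = \<gamma> *\<^sub>R (G (y (Suc (Suc t))) - G (y (Suc t)))"
      unfolding aG by (simp add: algebra_simps)
    hence "norm (a (Suc t) - a t) = \<gamma> * norm (G (y (Suc (Suc t))) - G (y (Suc t)))"
      using \<gamma> by simp
    also have "\<dots> \<le> \<gamma> * (7 * norm (y (Suc (Suc t)) - y (Suc t)))"
      unfolding G_def using G_lip[OF C(1,2,3)] \<gamma> by (intro mult_left_mono) auto
    finally show ?thesis by simp
  qed
  define \<phi> where "\<phi> u = \<gamma> * (Fd C u + 5/2 * (norm u)\<^sup>2)" for u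
  define \<psi> where "\<psi> u = - (5*\<gamma>/2) * (norm u)\<^sup>2" for u :: "real^'n"
  define E where "E t = \<phi> (y (Suc t)) + \<psi> (z (Suc t)) + (norm (z (Suc t) - (y (Suc t) - a t)))\<^sup>2 / 2
      - (norm (a t))\<^sup>2 / 2" for t
  define dd where "dd t = (norm (y (Suc (Suc t)) - y (Suc t)))\<^sup>2" for t
  have Estep: "E (Suc t) \<le> E t - \<gamma>/4 * dd t" for t
  proof -
    have zdef: "z (Suc t) = (1/2) *\<^sub>R (y (Suc (Suc t)) + a (Suc t) + y (Suc t) - a t)"
    proof -
      have "y (Suc (Suc t)) + a (Suc t) + y (Suc t) - a t = x (Suc t) + 2 *\<^sub>R y (Suc t) - x t"
        by (simp add: a_def algebra_simps scaleR_2)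
      also have "\<dots> = 2 *\<^sub>R z (Suc t)" by (simp add: x_step algebra_simps scaleR_2)
      finally show ?thesis by simp
    qed
    have H1: "\<phi> (y (Suc t)) \<ge> \<phi> (y (Suc (Suc t))) + inner (a (Suc t)) (y (Suc t) - y (Suc (Suc t)))
        + (5*\<gamma>/2) * (norm (y (Suc (Suc t)) - y (Suc t)))\<^sup>2"
      using f_strong[OF C(1,2,3) \<gamma>(1), where p="y (Suc t)" and q="y (Suc (Suc t))"]
      unfolding \<phi>_def aG[of "Suc t"] G_def .
    have H2: "(norm (a (Suc t) - a t))\<^sup>2 \<le> 49 * \<gamma>\<^sup>2 * (norm (y (Suc (Suc t)) - y (Suc t)))\<^sup>2"
    proof -
      have "(norm (a (Suc t) - a t))\<^sup>2 \<le> (7 * \<gamma> * norm (y (Suc (Suc t)) - y (Suc t)))\<^sup>2"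
        using aL[of t] by (intro power_mono) auto
      thus ?thesis by (simp add: power_mult_distrib)
    qed
    have wS: "y (Suc (Suc t)) - a (Suc t) = 2 *\<^sub>R y (Suc (Suc t)) - x (Suc t)"
      by (simp add: a_def algebra_simps scaleR_2)
    have H3: "\<psi> (z (Suc (Suc t))) + (norm (z (Suc (Suc t)) - (y (Suc (Suc t)) - a (Suc t))))\<^sup>2 / 2
        \<le> \<psi> (z (Suc t)) + (norm (z (Suc t) - (y (Suc (Suc t)) - a (Suc t))))\<^sup>2 / 2"
      unfolding \<psi>_def wS
      using zopt[of "1 - 5*\<gamma>" \<gamma> "z (Suc (Suc t))" D "2 *\<^sub>R y (Suc (Suc t)) - x (Suc t)" "z (Suc t)"]
        B0 z_step[of "Suc t"] zD[of t] unfolding B_def by simp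
    show ?thesis unfolding E_def dd_def
      by (rule merit_step[OF \<gamma> zdef H1 H2 H3])
  qed
  define Ma where "Ma = M + My"
  have aB: "norm (a t) \<le> Ma" for t
    unfolding a_def Ma_def using Mx[of t] Myb[of t] norm_triangle_ineq4[of "x t" "y (Suc t)"] by linarith
  define L where "L = (5*\<gamma>/2) * R\<^sup>2 + Ma\<^sup>2 / 2"
  have Elow: "E t \<ge> - L" for t
  proof -
    have p1: "\<phi> (y (Suc t)) \<ge> 0" unfolding \<phi>_def Fd_def using \<gamma> by simp
    have "(norm (z (Suc t)))\<^sup>2 \<le> R\<^sup>2" using R[OF zD[of t]] by (intro power_mono) auto
    hence p2: "\<psi> (z (Suc t)) \<ge> - (5*\<gamma>/2) * R\<^sup>2" unfolding \<psi>_def using \<gamma> by simp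
    have "(norm (a t))\<^sup>2 \<le> Ma\<^sup>2" using aB[of t] by (intro power_mono) auto
    moreover have "(norm (z (Suc t) - (y (Suc t) - a t)))\<^sup>2 / 2 \<ge> 0" by simp
    ultimately show ?thesis unfolding E_def L_def using p1 p2 by linarith
  qed
  have tel: "E n \<le> E 0 - \<gamma>/4 * (\<Sum>i<n. dd i)" for n
  proof (induction n)
    case 0 then show ?case by simp
  next
    case (Suc n)
    then show ?case using Estep[of n] by (simp add: algebra_simps)
  qed
  have sumb: "(\<Sum>i<n. dd i) \<le> 4 * (E 0 + L) / \<gamma>" for n
  proof -
    have "\<gamma>/4 * (\<Sum>i<n. dd i) \<le> E 0 + L" using tel[of n] Elow[of n] by linarith
    thus ?thesis using \<gamma> by (simp add: field_simps)
  qed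
  have "summable dd"
  proof (rule summableI_nonneg_bounded)
    show "0 \<le> dd n" for n by (simp add: dd_def)
    show "(\<Sum>i<n. dd i) \<le> 4 * (E 0 + L) / \<gamma>" for n by (rule sumb)
  qed
  hence "dd \<longlonglongrightarrow> 0" by (rule summable_LIMSEQ_zero)
  hence "(\<lambda>t. sqrt (dd t)) \<longlonglongrightarrow> sqrt 0" by (rule tendsto_real_sqrt)
  hence "(\<lambda>t. norm (y (Suc (Suc t)) - y (Suc t))) \<longlonglongrightarrow> 0" by (simp add: dd_def)
  hence dlim: "(\<lambda>t. (1 + 7*\<gamma>)/2 * norm (y (Suc (Suc t)) - y (Suc t))) \<longlonglongrightarrow> 0"
    by (rule tendsto_mult_right_zero)
  have zy: "(\<lambda>t. z (Suc t) - y (Suc t)) \<longlonglongrightarrow> 0"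
  proof (rule Lim_null_comparison[OF _ dlim], rule always_eventually, rule allI)
    fix t
    have "x (Suc t) - x t = (y (Suc (Suc t)) - y (Suc t)) + (a (Suc t) - a t)"
      by (simp add: a_def algebra_simps)
    hence "norm (x (Suc t) - x t) \<le> norm (y (Suc (Suc t)) - y (Suc t)) + norm (a (Suc t) - a t)"
      by (metis norm_triangle_ineq)
    moreover have "x (Suc t) - x t = 2 *\<^sub>R (z (Suc t) - y (Suc t))" by (simp add: x_step)
    hence "norm (x (Suc t) - x t) = 2 * norm (z (Suc t) - y (Suc t))" by simp
    ultimately show "norm (z (Suc t) - y (Suc t)) \<le> (1 + 7*\<gamma>)/2 * norm (y (Suc (Suc t)) - y (Suc t))"
      using aL[of t] by (simp add: algebra_simps)
  qed
  have zy0: "(\<lambda>t. z t - y t) \<longlonglongrightarrow> 0" using zy by (rule LIMSEQ_imp_Suc)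
  have Fd_eq: "(\<lambda>u. (infdist u C)\<^sup>2 / 2) = Fd C" using infdist_Fd[OF C(1,3)] by (intro ext)
  have main: "yb = zb \<and>
       (\<exists>g v. ((\<lambda>u. (infdist u C)\<^sup>2 / 2) has_derivative (\<lambda>h. g \<bullet> h)) (at zb) \<and>
              v \<in> limiting_subdiff (indicator_fun D) zb \<and> g + v = 0)"
    if ex: "\<exists>r. strict_mono r \<and> (\<lambda>t. (y (r t), z (r t), x (r t))) \<longlonglongrightarrow> (yb, zb, xb)" for yb zb xb
  proof -
    obtain r where r: "strict_mono r" and lim: "(\<lambda>t. (y (r t), z (r t), x (r t))) \<longlonglongrightarrow> (yb, zb, xb)"
      using ex by blast
    have Ly: "(\<lambda>t. y (r t)) \<longlonglongrightarrow> yb" using tendsto_fst[OF lim] by simp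
    have Lz: "(\<lambda>t. z (r t)) \<longlonglongrightarrow> zb" using tendsto_fst[OF tendsto_snd[OF lim]] by simp
    have Lx: "(\<lambda>t. x (r t)) \<longlonglongrightarrow> xb" using tendsto_snd[OF tendsto_snd[OF lim]] by simp
    have "(\<lambda>t. z (r t) - y (r t)) \<longlonglongrightarrow> 0" using LIMSEQ_subseq_LIMSEQ[OF zy0 r] by (simp add: o_def)
    moreover have "(\<lambda>t. z (r t) - y (r t)) \<longlonglongrightarrow> zb - yb" by (rule tendsto_diff[OF Lz Ly])
    ultimately have "zb - yb = 0" using LIMSEQ_unique by blast
    hence yz: "yb = zb" by simp
    define s where "s t = r (Suc t) - 1" for t
    have sS: "Suc (s t) = r (Suc t)" for t
      unfolding s_def using seq_suble[OF r, of "Suc t"] by simp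
    have Ly': "(\<lambda>t. y (Suc (s t))) \<longlonglongrightarrow> yb" unfolding sS using LIMSEQ_Suc[OF Ly] .
    have Lz': "(\<lambda>t. z (Suc (s t))) \<longlonglongrightarrow> zb" unfolding sS using LIMSEQ_Suc[OF Lz] .
    have Lx1: "(\<lambda>t. x (Suc (s t))) \<longlonglongrightarrow> xb" unfolding sS using LIMSEQ_Suc[OF Lx] .
    have Lx': "(\<lambda>t. x (s t)) \<longlonglongrightarrow> xb"
    proof -
      have "(\<lambda>t. x (Suc (s t)) - 2 *\<^sub>R (z (Suc (s t)) - y (Suc (s t)))) \<longlonglongrightarrow> xb - 2 *\<^sub>R (zb - yb)"
        by (intro tendsto_intros Lx1 Lz' Ly')
      then show ?thesis using yz by (simp add: x_step)
    qed
    define Pb where "Pb = closest_point C ((1/A) *\<^sub>R xb)"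
    have LP: "(\<lambda>t. P (s t)) \<longlonglongrightarrow> Pb"
      unfolding P_def Pb_def
      by (rule isCont_tendsto_compose[OF continuous_at_closest_point[OF C(2,1,3)]]) (intro tendsto_intros Lx')
    have "(\<lambda>t. y (Suc (s t))) \<longlonglongrightarrow> (1/k) *\<^sub>R (\<gamma> *\<^sub>R Pb + xb)"
      unfolding yS by (intro tendsto_intros LP Lx')
    hence yb_eq: "yb = (1/k) *\<^sub>R (\<gamma> *\<^sub>R Pb + xb)" using LIMSEQ_unique[OF Ly'] by blast
    have cpz: "closest_point C zb = Pb"
      unfolding yz[symmetric] yb_eq Pb_def by (rule cpgen)
    have "k *\<^sub>R yb = \<gamma> *\<^sub>R Pb + xb" using yb_eq k0 by simp
    hence xb_eq: "xb = k *\<^sub>R zb - \<gamma> *\<^sub>R Pb" using yz by (simp add: algebra_simps)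
    define W where "W t = (1/B) *\<^sub>R (2 *\<^sub>R y (Suc (s t)) - x (s t))" for t
    define vs where "vs t = (B/\<gamma>) *\<^sub>R (W t - z (Suc (s t)))" for t
    have vsF: "vs t \<in> frechet_subdiff (indicator_fun D) (z (Suc (s t)))" for t
      unfolding vs_def W_def
      by (rule prox_normal[OF z_step[of "s t", folded B_def]]) (use B0 \<gamma> in simp)
    define v where "v = (B/\<gamma>) *\<^sub>R ((1/B) *\<^sub>R (2 *\<^sub>R yb - xb) - zb)"
    have vlim: "vs \<longlonglongrightarrow> v" unfolding vs_def W_def v_def by (intro tendsto_intros Ly' Lx' Lz')
    have zbD: "zb \<in> D"
      by (rule closed_sequentially[OF compact_imp_closed[OF D(1)] _ Lz']) (rule zD)
    have vL: "v \<in> limiting_subdiff (indicator_fun D) zb"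
      unfolding limiting_subdiff_def mem_Collect_eq
      apply (rule exI[of _ "\<lambda>t. z (Suc (s t))"], rule exI[of _ vs])
      using Lz' vlim vsF zD zbD by (simp add: indicator_fun_def)
    have vcomp: "v $ i = Pb $ i - zb $ i" for i
    proof -
      have Bn: "B \<noteq> 0" and gn: "\<gamma> \<noteq> 0" using B0 \<gamma> by auto
      have "v $ i = (B/\<gamma>) * ((1/B) * (2 * zb $ i - xb $ i) - zb $ i)" by (simp add: v_def yz)
      also have "xb $ i = k * zb $ i - \<gamma> * Pb $ i" by (simp add: xb_eq)
      also have "(B/\<gamma>) * ((1/B) * (2 * zb $ i - (k * zb $ i - \<gamma> * Pb $ i)) - zb $ i)
          = (2 - k - B) / \<gamma> * zb $ i + Pb $ i"
        using Bn gn by (simp add: field_simps)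
      also have "(2 - k - B) / \<gamma> = -1" using gn by (simp add: k_def B_def field_simps)
      finally show ?thesis by simp
    qed
    have vval: "v = Pb - zb" by (simp add: vec_eq_iff vcomp)
    have der: "((\<lambda>u. (infdist u C)\<^sup>2 / 2) has_derivative (\<lambda>h. (zb - Pb) \<bullet> h)) (at zb)"
      unfolding Fd_eq using Fd_deriv[OF C(1,2,3), of zb] unfolding cpz .
    show ?thesis using yz der vL vval by (intro conjI exI[of _ "zb - Pb"] exI[of _ v]) auto
  qed
  show ?thesis using bnd main by blast
qed

end
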